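(* Let $T\subset\mathbb{R}^d$ ($d\in\{2,3\}$) be a nondegenerate simplex. The set $\{S^i:i\in\mathcal{V}\}$ (if $d=2$), resp. $\{S^i_q:i\in\mathcal{V},\ q=0,1\}$ (if $d=3$), is a basis of $\mathbb{D}$. Moreover, for $i\neq j$, $i,j\in\mathcal{V}$, the normal-tangential components on the facet $F_j$ vanish: $(S^i)_{nt}|_{F_j}=0$ and $(S^i_q)_{nt}|_{F_j}=0$, while on $F_i$ these normal-tangential components do not vanish. When $d=3$ and $i\in\mathcal{V}$, $$t_{i+2,i+3}^T S^i_0 n_i=0,\quad t_{i+1,i+2}^T S^i_0 n_i\neq0,\quad t_{i+3,i+1}^T S^i_0 n_i\neq 0,$$ $$t_{i+2,i+3}^T S^i_1 n_i\neq0,\quad t_{i+1,i+2}^T S^i_1 n_i\neq0,\quad t_{i+3,i+1}^T S^i_1 n_i=0.$$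
   Context: $\mathcal{V}=\{0,1,2\}$ if $d=2$ and $\{0,1,2,3\}$ if $d=3$; $V_i$ ($i\in\mathcal{V}$) are the vertices of $T$, $F_i$ the facet opposite $V_i$, $n_i$ its outward unit normal, $t_{ij}=(V_i-V_j)/|V_i-V_j|$, and $\lambda_i$ the barycentric coordinate equal to $1$ at $V_i$. $\mathbb{D}=\{M\in\mathbb{R}^{d\times d}:\operatorname{tr}M=0\}$, $\operatorname{dev}\tau=\tau-\frac{\operatorname{tr}\tau}{d}I$, $a\otimes b=ab^T$. For $d=2$: $S^i=\operatorname{dev}(\nabla\lambda_{i+1}\otimes\operatorname{curl}\lambda_{i+2})$ with $\operatorname{curl}\phi=(-\partial_2\phi,\partial_1\phi)^T$ and indices mod 3. For $d=3$: $S^i_0=\operatorname{dev}(\nabla\lambda_{i+1}\otimes(\nabla\lambda_{i+2}\times\nabla\lambda_{i+3}))$, $S^i_1=\operatorname{dev}(\nabla\lambda_{i+2}\otimes(\nabla\lambda_{i+3}\times\nabla\lambda_{i+1}))$, indices mod 4 (also for the tangents $t$). For a matrix $\tau$ and a facet with unit normal $n$: $\tau_{nn}=n^T\tau n$, $\tau_{nt}=\tau n-\tau_{nn}n$. *)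

theory Defs
  imports "HOL-Analysis.Analysis"
begin

text \<open>Simplices in R^d, d = CARD('n), with vertices V 0, ..., V d (indexed by nat).\<close>

definition nondeg_simplex :: "(nat \<Rightarrow> real^'n) \<Rightarrow> bool" where
  "nondeg_simplex V \<longleftrightarrow> inj_on V {..CARD('n)} \<and> \<not> affine_dependent (V ` {..CARD('n)})"

definition bary :: "(nat \<Rightarrow> real^'n) \<Rightarrow> nat \<Rightarrow> real^'n \<Rightarrow> real" where
  "bary V i = (THE f. (\<exists>g c. \<forall>x. f x = g \<bullet> x + c) \<and>
                       (\<forall>j\<le>CARD('n). f (V j) = (if j = i then 1 else 0)))"

definition grad_bary :: "(nat \<Rightarrow> real^'n) \<Rightarrow> nat \<Rightarrow> real^'n" where
  "grad_bary V i = (THE g. \<forall>x. (bary V i has_derivative (\<lambda>h. g \<bullet> h)) (at x))"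

definition facet :: "(nat \<Rightarrow> real^'n) \<Rightarrow> nat \<Rightarrow> (real^'n) set" where
  "facet V i = convex hull (V ` ({..CARD('n)} - {i}))"

definition outer_normal :: "(nat \<Rightarrow> real^'n) \<Rightarrow> nat \<Rightarrow> real^'n" where
  "outer_normal V i = (THE n. norm n = 1 \<and>
      (\<forall>x\<in>facet V i. \<forall>y\<in>facet V i. n \<bullet> (x - y) = 0) \<and>
      (\<forall>x\<in>facet V i. n \<bullet> (x - V i) > 0))"

definition tangent :: "(nat \<Rightarrow> real^'n) \<Rightarrow> nat \<Rightarrow> nat \<Rightarrow> real^'n" where
  "tangent V i j = (1 / norm (V i - V j)) *\<^sub>R (V i - V j)"

definition outer_prod :: "real^'n \<Rightarrow> real^'n \<Rightarrow> real^'n^'n" where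
  "outer_prod a b = (\<chi> i j. a $ i * b $ j)"

definition dev :: "real^'n^'n \<Rightarrow> real^'n^'n" where
  "dev \<tau> = \<tau> - (trace \<tau> / real CARD('n)) *\<^sub>R mat 1"

text \<open>The space D of trace-free matrices.\<close>
definition tracefree :: "(real^'n^'n) set" where
  "tracefree = {M. trace M = 0}"

definition nn_comp :: "real^'n^'n \<Rightarrow> real^'n \<Rightarrow> real" where
  "nn_comp \<tau> n = n \<bullet> (\<tau> *v n)"

definition nt_comp :: "real^'n^'n \<Rightarrow> real^'n \<Rightarrow> real^'n" where
  "nt_comp \<tau> n = \<tau> *v n - nn_comp \<tau> n *\<^sub>R n"

text \<open>2D curl of a scalar function with gradient g: (-d2, d1).\<close>
definition curl2 :: "real^2 \<Rightarrow> real^2" where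
  "curl2 g = vector [- (g $ 2), g $ 1]"

definition S2 :: "(nat \<Rightarrow> real^2) \<Rightarrow> nat \<Rightarrow> real^2^2" where
  "S2 V i = dev (outer_prod (grad_bary V ((i+1) mod 3)) (curl2 (grad_bary V ((i+2) mod 3))))"

definition S3 :: "(nat \<Rightarrow> real^3) \<Rightarrow> nat \<Rightarrow> nat \<Rightarrow> real^3^3" where
  "S3 V i q = (if q = 0
     then dev (outer_prod (grad_bary V ((i+1) mod 4))
                (cross3 (grad_bary V ((i+2) mod 4)) (grad_bary V ((i+3) mod 4))))
     else dev (outer_prod (grad_bary V ((i+2) mod 4))
                (cross3 (grad_bary V ((i+3) mod 4)) (grad_bary V ((i+1) mod 4)))))"

end

theory Submission
  imports Defs
begin


lemma nondeg_span0:
  fixes V :: "nat \<Rightarrow> real^'n"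
  assumes "nondeg_simplex V"
  shows "span ((\<lambda>j. V j - V 0) ` {1..CARD('n)}) = UNIV"
proof -
  have inj: "inj_on V {..CARD('n)}" and ai: "\<not> affine_dependent (V ` {..CARD('n)})"
    using assms unfolding nondeg_simplex_def by auto
  have eq: "V ` {..CARD('n)} = insert (V 0) (V ` {1..CARD('n)})" proof -
    have "{..CARD('n)} = insert 0 {1..CARD('n)}" by auto
    then show ?thesis by simp
  qed
  have notin: "V 0 \<notin> V ` {1..CARD('n)}"
  proof
    assume "V 0 \<in> V ` {1..CARD('n)}"
    then obtain x where x: "x \<in> {1..CARD('n)}" "V 0 = V x" by auto
    then have "0 = x" using inj_onD[OF inj, of 0 x] by auto
    then show False using x by auto
  qed
  have "\<not> dependent ((\<lambda>x. - V 0 + x) ` (V ` {1..CARD('n)}))"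
    using ai eq affine_dependent_iff_dependent[OF notin] by simp
  moreover have im: "(\<lambda>x. - V 0 + x) ` (V ` {1..CARD('n)}) = (\<lambda>j. V j - V 0) ` {1..CARD('n)}"
    by (auto simp: image_iff)
  ultimately have ind: "independent ((\<lambda>j. V j - V 0) ` {1..CARD('n)})" by simp
  have "inj_on (\<lambda>j. V j - V 0) {1..CARD('n)}"
    using inj by (auto simp: inj_on_def)
  then have "card ((\<lambda>j. V j - V 0) ` {1..CARD('n)}) = CARD('n)"
    by (simp add: card_image)
  then have "UNIV \<subseteq> span ((\<lambda>j. V j - V 0) ` {1..CARD('n)})"
    using card_ge_dim_independent[OF subset_UNIV ind] by simp
  then show ?thesis by auto
qed

lemma aff_zero:
  fixes V :: "nat \<Rightarrow> real^'n"
  assumes "nondeg_simplex V" "\<And>j. j \<le> CARD('n) \<Longrightarrow> g \<bullet> V j + c = 0"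
  shows "g = 0 \<and> c = 0"
proof -
  have "(\<lambda>j. V j - V 0) ` {1..CARD('n)} \<subseteq> {x. g \<bullet> x = 0}"
  proof
    fix x assume "x \<in> (\<lambda>j. V j - V 0) ` {1..CARD('n)}"
    then obtain j where j: "j \<le> CARD('n)" "x = V j - V 0" by auto
    have "g \<bullet> V j + c = 0" "g \<bullet> V 0 + c = 0" using assms(2)[OF j(1)] assms(2)[of 0] by auto
    then show "x \<in> {x. g \<bullet> x = 0}" using j by (simp add: inner_diff_right)
  qed
  then have "span ((\<lambda>j. V j - V 0) ` {1..CARD('n)}) \<subseteq> {x. g \<bullet> x = 0}"
    by (rule span_minimal[OF _ subspace_hyperplane])
  then have "g \<bullet> g = 0" using nondeg_span0[OF assms(1)] by blast
  then have g: "g = 0" by simp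
  then show ?thesis using assms(2)[of 0] by simp
qed

lemma linear_inner_rep:
  fixes f :: "real^'n \<Rightarrow> real"
  assumes "linear f"
  shows "\<exists>w. \<forall>x. f x = w \<bullet> x"
  using adjoint_works[OF assms, of _ 1] by (metis inner_commute inner_real_def mult.right_neutral)

lemma bary_exists:
  fixes V :: "nat \<Rightarrow> real^'n"
  assumes "nondeg_simplex V" "i \<le> CARD('n)"
  shows "\<exists>g c. \<forall>j\<le>CARD('n). g \<bullet> V j + c = (if j = i then 1 else 0)"
proof -
  let ?B = "(\<lambda>j. V j - V 0) ` {1..CARD('n)}"
  have inj: "inj_on V {..CARD('n)}" and ai: "\<not> affine_dependent (V ` {..CARD('n)})"
    using assms unfolding nondeg_simplex_def by auto
  have "span ?B = UNIV" by (rule nondeg_span0[OF assms(1)])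
  have ind: "independent ?B"
  proof -
    have eq: "V ` {..CARD('n)} = insert (V 0) (V ` {1..CARD('n)})"
    proof -
      have "{..CARD('n)} = insert 0 {1..CARD('n)}" by auto
      then show ?thesis by simp
    qed
    have notin: "V 0 \<notin> V ` {1..CARD('n)}"
    proof
      assume "V 0 \<in> V ` {1..CARD('n)}"
      then obtain x where x: "x \<in> {1..CARD('n)}" "V 0 = V x" by auto
      then have "0 = x" using inj_onD[OF inj, of 0 x] by auto
      then show False using x by auto
    qed
    have "\<not> dependent ((\<lambda>x. - V 0 + x) ` (V ` {1..CARD('n)}))"
      using ai eq affine_dependent_iff_dependent[OF notin] by simp
    moreover have im: "(\<lambda>x. - V 0 + x) ` (V ` {1..CARD('n)}) = ?B"
      by (auto simp: image_iff)
    ultimately show ?thesis by simp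
  qed
  define h where "h = (\<lambda>y. (if i \<noteq> 0 \<and> y = V i - V 0 then 1 else 0) - (if i = 0 then 1 else (0::real)))"
  obtain f where f: "linear f" "\<forall>x\<in>?B. f x = h x"
    using linear_independent_extend[OF ind, of h] by auto
  obtain w where w: "\<forall>x. f x = w \<bullet> x" using linear_inner_rep[OF f(1)] by auto
  show ?thesis
  proof (intro exI allI impI)
    fix j assume j: "j \<le> CARD('n)"
    show "w \<bullet> V j + (- (w \<bullet> V 0) + (if i = 0 then 1 else 0)) = (if j = i then 1 else 0)"
    proof (cases "j = 0")
      case True then show ?thesis by auto
    next
      case False
      then have "V j - V 0 \<in> ?B" using j by auto
      then have "w \<bullet> (V j - V 0) = h (V j - V 0)" using f w by auto
      moreover have "(V j - V 0 = V i - V 0) \<longleftrightarrow> j = i"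
        using inj_onD[OF inj, of j i] j assms(2) by auto
      ultimately show ?thesis using False by (auto simp: h_def inner_diff_right)
    qed
  qed
qed

lemma bary_eq:
  fixes V :: "nat \<Rightarrow> real^'n"
  assumes "nondeg_simplex V" "i \<le> CARD('n)"
  obtains g c where "bary V i = (\<lambda>x. g \<bullet> x + c)" "\<forall>j\<le>CARD('n). g \<bullet> V j + c = (if j = i then 1 else 0)"
proof -
  obtain g c where gc: "\<forall>j\<le>CARD('n). g \<bullet> V j + c = (if j = i then 1 else 0)"
    using bary_exists[OF assms] by auto
  have "bary V i = (\<lambda>x. g \<bullet> x + c)"
    unfolding bary_def
  proof (rule the1_equality)
    show "\<exists>!f. (\<exists>g c. \<forall>x. f x = g \<bullet> x + c) \<and> (\<forall>j\<le>CARD('n). f (V j) = (if j = i then 1 else 0))"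
    proof (rule ex1I[of _ "\<lambda>x. g \<bullet> x + c"])
      show "(\<exists>g' c'. \<forall>x. g \<bullet> x + c = g' \<bullet> x + c') \<and> (\<forall>j\<le>CARD('n). g \<bullet> V j + c = (if j = i then 1 else 0))"
        using gc by blast
    next
      fix f assume "(\<exists>g c. \<forall>x. f x = g \<bullet> x + c) \<and> (\<forall>j\<le>CARD('n). f (V j) = (if j = i then 1 else 0))"
      then obtain g' c' where f: "\<forall>x. f x = g' \<bullet> x + c'" "\<forall>j\<le>CARD('n). f (V j) = (if j = i then 1 else 0)"
        by blast
      have "\<And>j. j \<le> CARD('n) \<Longrightarrow> (g' - g) \<bullet> V j + (c' - c) = 0"
        using f gc by (simp add: inner_diff_left algebra_simps)
      then have "g' - g = 0 \<and> c' - c = 0" by (rule aff_zero[OF assms(1)])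
      then show "f = (\<lambda>x. g \<bullet> x + c)" using f(1) by auto
    qed
  qed (use gc in auto)
  then show ?thesis using that gc by blast
qed

lemma grad_bary_eq:
  fixes V :: "nat \<Rightarrow> real^'n"
  assumes "bary V i = (\<lambda>x. g \<bullet> x + c)"
  shows "grad_bary V i = g"
  unfolding grad_bary_def
proof (rule the_equality)
  show "\<forall>x. (bary V i has_derivative (\<lambda>h. g \<bullet> h)) (at x)"
    unfolding assms by (auto intro!: derivative_eq_intros)
next
  fix g' assume "\<forall>x. (bary V i has_derivative (\<lambda>h. g' \<bullet> h)) (at x)"
  moreover have "(bary V i has_derivative (\<lambda>h. g \<bullet> h)) (at 0)"
    unfolding assms by (auto intro!: derivative_eq_intros)
  ultimately have "(\<lambda>h. g' \<bullet> h) = (\<lambda>h. g \<bullet> h)" using has_derivative_unique by blast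
  then have "(g' - g) \<bullet> (g' - g) = 0" by (metis inner_diff_left right_minus_eq)
  then show "g' = g" by simp
qed

lemma bary_grad:
  fixes V :: "nat \<Rightarrow> real^'n"
  assumes "nondeg_simplex V" "i \<le> CARD('n)"
  shows "bary V i x = grad_bary V i \<bullet> x + bary V i 0"
    and "j \<le> CARD('n) \<Longrightarrow> grad_bary V i \<bullet> V j + bary V i 0 = (if j = i then 1 else 0)"
proof -
  obtain g c where gc: "bary V i = (\<lambda>x. g \<bullet> x + c)" "\<forall>j\<le>CARD('n). g \<bullet> V j + c = (if j = i then 1 else 0)"
    using bary_eq[OF assms] by blast
  have G: "grad_bary V i = g" by (rule grad_bary_eq[OF gc(1)])
  show "bary V i x = grad_bary V i \<bullet> x + bary V i 0" using gc G by simp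
  show "j \<le> CARD('n) \<Longrightarrow> grad_bary V i \<bullet> V j + bary V i 0 = (if j = i then 1 else 0)"
    using gc G by simp
qed

lemma grad_diff:
  fixes V :: "nat \<Rightarrow> real^'n"
  assumes "nondeg_simplex V" "i \<le> CARD('n)" "j \<le> CARD('n)" "k \<le> CARD('n)"
  shows "grad_bary V i \<bullet> (V j - V k) = (if j = i then 1 else 0) - (if k = i then 1 else 0)"
  using bary_grad(2)[OF assms(1,2) assms(3)] bary_grad(2)[OF assms(1,2) assms(4)]
  by (simp add: inner_diff_right)



lemma grad_sum:
  fixes V :: "nat \<Rightarrow> real^'n"
  assumes "nondeg_simplex V"
  shows "(\<Sum>k\<le>CARD('n). grad_bary V k) = 0"
proof -
  have "\<And>j. j \<le> CARD('n) \<Longrightarrow> (\<Sum>k\<le>CARD('n). grad_bary V k) \<bullet> V j + ((\<Sum>k\<le>CARD('n). bary V k 0) - 1) = 0"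
  proof -
    fix j assume j: "j \<le> CARD('n)"
    have "(\<Sum>k\<le>CARD('n). grad_bary V k) \<bullet> V j + ((\<Sum>k\<le>CARD('n). bary V k 0) - 1)
       = (\<Sum>k\<le>CARD('n). grad_bary V k \<bullet> V j + bary V k 0) - 1"
      by (simp add: inner_sum_left sum.distrib)
    also have "\<dots> = (\<Sum>k\<le>CARD('n). if j = k then 1 else 0) - 1"
      using bary_grad(2)[OF assms _ j] by (intro arg_cong[where f="\<lambda>x. x - 1"] sum.cong) auto
    also have "\<dots> = 0" using j by simp
    finally show "?thesis j" .
  qed
  from aff_zero[OF assms this] show ?thesis by simp
qed

lemma grad_rep:
  fixes V :: "nat \<Rightarrow> real^'n"
  assumes "nondeg_simplex V"
  shows "w = (\<Sum>k\<le>CARD('n). (w \<bullet> V k) *\<^sub>R grad_bary V k)"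
proof -
  have "\<And>j. j \<le> CARD('n) \<Longrightarrow> ((\<Sum>k\<le>CARD('n). (w \<bullet> V k) *\<^sub>R grad_bary V k) - w) \<bullet> V j + (\<Sum>k\<le>CARD('n). (w \<bullet> V k) * bary V k 0) = 0"
  proof -
    fix j assume j: "j \<le> CARD('n)"
    have "((\<Sum>k\<le>CARD('n). (w \<bullet> V k) *\<^sub>R grad_bary V k) - w) \<bullet> V j + (\<Sum>k\<le>CARD('n). (w \<bullet> V k) * bary V k 0)
       = (\<Sum>k\<le>CARD('n). (w \<bullet> V k) * (grad_bary V k \<bullet> V j + bary V k 0)) - w \<bullet> V j"
      by (simp add: inner_sum_left inner_diff_left sum.distrib distrib_left)
    also have "\<dots> = (\<Sum>k\<le>CARD('n). if j = k then w \<bullet> V k else 0) - w \<bullet> V j"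
      using bary_grad(2)[OF assms _ j] by (intro arg_cong[where f="\<lambda>x. x - w \<bullet> V j"] sum.cong) auto
    also have "\<dots> = 0" using j by simp
    finally show "?thesis j" .
  qed
  from aff_zero[OF assms this] show ?thesis by simp
qed

lemma grad_orth_zero:
  fixes V :: "nat \<Rightarrow> real^'n"
  assumes "nondeg_simplex V" "\<And>k. k \<le> CARD('n) \<Longrightarrow> w \<bullet> grad_bary V k = 0"
  shows "w = 0"
proof -
  have "w \<bullet> w = w \<bullet> (\<Sum>k\<le>CARD('n). (w \<bullet> V k) *\<^sub>R grad_bary V k)"
    using grad_rep[OF assms(1), of w] by simp
  also have "\<dots> = 0" using assms(2) by (simp add: inner_sum_right)
  finally show ?thesis by simp
qed



lemma grad_nonzero:
  fixes V :: "nat \<Rightarrow> real^'n"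
  assumes "nondeg_simplex V" "i \<le> CARD('n)"
  shows "grad_bary V i \<noteq> 0"
proof -
  define k where "k = (if i = 0 then 1 else 0::nat)"
  have k: "k \<le> CARD('n)" "k \<noteq> i" unfolding k_def by auto
  show ?thesis using grad_diff[OF assms assms(2) k(1)] k by auto
qed

lemma outer_normal_eq:
  fixes V :: "nat \<Rightarrow> real^'n"
  assumes "nondeg_simplex V" "i \<le> CARD('n)"
  shows "outer_normal V i = - (1 / norm (grad_bary V i)) *\<^sub>R grad_bary V i"
proof -
  let ?G = "grad_bary V i"
  let ?c = "bary V i 0"
  have G0: "?G \<noteq> 0" by (rule grad_nonzero[OF assms])
  have fac: "facet V i \<subseteq> {x. ?G \<bullet> x = - ?c}"
    unfolding facet_def
  proof (rule hull_minimal)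
    show "convex {x. ?G \<bullet> x = - ?c}" by (rule convex_hyperplane)
    show "V ` ({..CARD('n)} - {i}) \<subseteq> {x. ?G \<bullet> x = - ?c}"
    proof
      fix x assume "x \<in> V ` ({..CARD('n)} - {i})"
      then obtain j where j: "j \<le> CARD('n)" "j \<noteq> i" "x = V j" by auto
      show "x \<in> {x. ?G \<bullet> x = - ?c}" using bary_grad(2)[OF assms j(1)] j by simp
    qed
  qed
  have Vi: "?G \<bullet> V i = 1 - ?c" using bary_grad(2)[OF assms assms(2)] by simp
  define k where "k = (if i = 0 then 1 else 0::nat)"
  have k: "k \<le> CARD('n)" "k \<noteq> i" unfolding k_def by auto
  have Vk: "V k \<in> facet V i" unfolding facet_def using k by (intro hull_inc) auto
  let ?n = "- (1 / norm ?G) *\<^sub>R ?G"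
  show ?thesis
    unfolding outer_normal_def
  proof (rule the_equality)
    show "norm ?n = 1 \<and> (\<forall>x\<in>facet V i. \<forall>y\<in>facet V i. ?n \<bullet> (x - y) = 0) \<and> (\<forall>x\<in>facet V i. ?n \<bullet> (x - V i) > 0)"
    proof (intro conjI ballI)
      show "norm ?n = 1" using G0 by simp
    next
      fix x y assume "x \<in> facet V i" "y \<in> facet V i"
      then have "?G \<bullet> x = - ?c" "?G \<bullet> y = - ?c" using fac by auto
      then show "?n \<bullet> (x - y) = 0" by (simp add: inner_diff_right)
    next
      fix x assume "x \<in> facet V i"
      then have "?G \<bullet> x = - ?c" using fac by auto
      then have "?n \<bullet> (x - V i) = 1 / norm ?G" using Vi G0 by (simp add: inner_diff_right field_simps)
      then show "?n \<bullet> (x - V i) > 0" using G0 by simp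
    qed
  next
    fix n assume n: "norm n = 1 \<and> (\<forall>x\<in>facet V i. \<forall>y\<in>facet V i. n \<bullet> (x - y) = 0) \<and> (\<forall>x\<in>facet V i. n \<bullet> (x - V i) > 0)"
    define a where "a = n \<bullet> V k"
    define b where "b = n \<bullet> V i"
    have "\<And>j. j \<le> CARD('n) \<Longrightarrow> (n - (b - a) *\<^sub>R ?G) \<bullet> V j + (- a - (b - a) * ?c) = 0"
    proof -
      fix j assume j: "j \<le> CARD('n)"
      show "?thesis j"
      proof (cases "j = i")
        case True
        have "(n - (b - a) *\<^sub>R ?G) \<bullet> V j + (- a - (b - a) * ?c) = b - (b - a) * (?G \<bullet> V i) - a - (b - a) * ?c"
          using True by (simp add: inner_diff_left b_def)
        also have "\<dots> = b - (b - a) * (1 - ?c) - a - (b - a) * ?c" using Vi by simp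
        also have "\<dots> = 0" by (simp add: algebra_simps)
        finally show ?thesis .
      next
        case False
        then have "V j \<in> facet V i" unfolding facet_def using j by (intro hull_inc) auto
        then have "n \<bullet> (V j - V k) = 0" using n Vk by blast
        then have "n \<bullet> V j = a" by (simp add: a_def inner_diff_right)
        moreover have "?G \<bullet> V j = - ?c" using bary_grad(2)[OF assms j] False by simp
        ultimately show ?thesis by (simp add: inner_diff_left algebra_simps)
      qed
    qed
    then have "n - (b - a) *\<^sub>R ?G = 0" using aff_zero[OF assms(1)] by blast
    then have ns: "n = (b - a) *\<^sub>R ?G" by simp
    have "?G \<bullet> V k = - ?c" using bary_grad(2)[OF assms k(1)] k by simp
    have "n \<bullet> (V k - V i) = - (b - a)" by (simp add: a_def b_def inner_diff_right)
    moreover have "n \<bullet> (V k - V i) > 0" using n Vk by blast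
    ultimately have neg: "b - a < 0" by linarith
    have "\<bar>b - a\<bar> * norm ?G = 1" using n ns by simp
    then have "b - a = - (1 / norm ?G)" using neg G0 by (simp add: field_simps)
    then show "n = ?n" using ns by simp
  qed
qed



lemma outer_prod_mv: "outer_prod a w *v n = (w \<bullet> n) *\<^sub>R a"
  by (simp add: vec_eq_iff outer_prod_def matrix_vector_mult_def inner_vec_def sum_distrib_left mult.commute mult.left_commute)

lemma dev_mv: "dev \<tau> *v n = \<tau> *v n - (trace \<tau> / real CARD('n)) *\<^sub>R (n::real^'n)"
  unfolding dev_def
  by (simp add: matrix_vector_mult_diff_rdistrib scaleR_matrix_vector_assoc[symmetric])

lemma trace_dev: "trace (dev (\<tau>::real^'n^'n)) = 0"
proof -
  have "trace ((trace \<tau> / real CARD('n)) *\<^sub>R (mat 1 :: real^'n^'n)) = trace \<tau>"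
    by (simp add: trace_def mat_def)
  then show ?thesis unfolding dev_def by (simp add: trace_sub)
qed

lemma dev_outer_mv: "dev (outer_prod a w) *v n = (w \<bullet> n) *\<^sub>R a - (trace (outer_prod a w) / real CARD('n)) *\<^sub>R (n::real^'n)"
  by (simp add: dev_mv outer_prod_mv)

lemma nt_dev_outer:
  assumes "norm n = 1"
  shows "nt_comp (dev (outer_prod a w)) n = (w \<bullet> n) *\<^sub>R (a - (a \<bullet> n) *\<^sub>R (n::real^'n))"
proof -
  have nn: "n \<bullet> n = 1" using assms by (simp add: dot_square_norm)
  show ?thesis unfolding nt_comp_def nn_comp_def dev_outer_mv
    by (simp add: inner_diff_right algebra_simps nn inner_commute)
qed

lemma tang_dev_outer:
  "t \<bullet> (dev (outer_prod a w) *v n) = (w \<bullet> n) * (t \<bullet> a) - (trace (outer_prod a w) / real CARD('n)) * (t \<bullet> (n::real^'n))"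
  unfolding dev_outer_mv by (simp add: inner_diff_right)

lemma linear_mv: "linear (\<lambda>M::real^'n^'m. M *v n)"
  by (rule linearI) (simp_all add: matrix_vector_mult_add_rdistrib scaleR_matrix_vector_assoc)

lemma linear_nt: "linear (\<lambda>M::real^'n^'n. nt_comp M n)"
  unfolding nt_comp_def nn_comp_def
  by (rule linearI) (simp_all add: matrix_vector_mult_add_rdistrib scaleR_matrix_vector_assoc[symmetric] inner_add_right algebra_simps)

lemma linear_tmv: "linear (\<lambda>M::real^'n^'n. t \<bullet> (M *v n))"
  by (rule linearI) (simp_all add: matrix_vector_mult_add_rdistrib scaleR_matrix_vector_assoc[symmetric] inner_add_right)

lemma indep_diag:
  fixes f :: "'k \<Rightarrow> 'v::real_vector" and L :: "'k \<Rightarrow> 'v \<Rightarrow> 'w::real_vector"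
  assumes fin: "finite K" and lin: "\<And>k. k \<in> K \<Longrightarrow> linear (L k)"
    and nz: "\<And>k. k \<in> K \<Longrightarrow> L k (f k) \<noteq> 0"
    and z: "\<And>k k'. k \<in> K \<Longrightarrow> k' \<in> K \<Longrightarrow> k' \<noteq> k \<Longrightarrow> L k (f k') = 0"
  shows "inj_on f K" "independent (f ` K)"
proof -
  show inj: "inj_on f K"
  proof (rule inj_onI)
    fix k k' assume "k \<in> K" "k' \<in> K" "f k = f k'"
    then show "k = k'" using nz z by metis
  qed
  show "independent (f ` K)"
  proof (rule independent_if_scalars_zero)
    show "finite (f ` K)" using fin by simp
  next
    fix c x assume s: "(\<Sum>x\<in>f ` K. c x *\<^sub>R x) = 0" and x: "x \<in> f ` K"
    then obtain k where k: "k \<in> K" "x = f k" by auto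
    have "(\<Sum>k'\<in>K. c (f k') *\<^sub>R f k') = 0" using s by (simp add: sum.reindex[OF inj])
    then have "L k (\<Sum>k'\<in>K. c (f k') *\<^sub>R f k') = 0" using lin[OF k(1)] by (simp add: linear_0)
    then have "(\<Sum>k'\<in>K. c (f k') *\<^sub>R L k (f k')) = 0"
      using lin[OF k(1)] by (simp add: linear_sum linear_scale)
    moreover have "(\<Sum>k'\<in>K. c (f k') *\<^sub>R L k (f k')) = c (f k) *\<^sub>R L k (f k)"
    proof -
      have "(\<Sum>k'\<in>K - {k}. c (f k') *\<^sub>R L k (f k')) = 0"
        by (rule sum.neutral) (use z k(1) in auto)
      then show ?thesis using sum.remove[OF fin k(1), of "\<lambda>k'. c (f k') *\<^sub>R L k (f k')"] by simp
    qed
    ultimately show "c x = 0" using nz[OF k(1)] k by simp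
  qed
qed

lemma span_tracefree:
  fixes B :: "(real^'n^'n) set"
  assumes "independent B" "B \<subseteq> tracefree" "card B = CARD('n) * CARD('n) - 1"
  shows "span B = tracefree"
proof -
  have sub: "subspace (tracefree :: (real^'n^'n) set)"
    unfolding tracefree_def subspace_def by (auto simp: trace_def sum.distrib sum_distrib_left[symmetric])
  have ne: "span (tracefree :: (real^'n^'n) set) \<noteq> UNIV"
  proof
    assume "span (tracefree :: (real^'n^'n) set) = UNIV"
    moreover have "span (tracefree :: (real^'n^'n) set) = tracefree" using sub by (simp add: span_eq_iff)
    ultimately have "(mat 1 :: real^'n^'n) \<in> tracefree" by auto
    then show False by (simp add: tracefree_def trace_I)
  qed
  have "dim (tracefree :: (real^'n^'n) set) \<noteq> CARD('n) * CARD('n)"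
    using ne dim_eq_full by (metis DIM_cart DIM_real mult.right_neutral)
  moreover have "dim (tracefree :: (real^'n^'n) set) \<le> CARD('n) * CARD('n)"
    using dim_subset_UNIV by (metis DIM_cart DIM_real mult.right_neutral)
  ultimately have "dim (tracefree :: (real^'n^'n) set) \<le> card B" using assms(3) by linarith
  then have "tracefree \<subseteq> span B" using card_ge_dim_independent[OF assms(2,1)] by simp
  moreover have "span B \<subseteq> tracefree" using span_minimal[OF assms(2) sub] .
  ultimately show ?thesis by auto
qed



abbreviation "G V k \<equiv> grad_bary V k"

lemma nrm_n:
  fixes V :: "nat \<Rightarrow> real^'n"
  assumes "nondeg_simplex V" "i \<le> CARD('n)"
  shows "norm (outer_normal V i) = 1"
  using outer_normal_eq[OF assms] grad_nonzero[OF assms] by simp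

lemma dot_n:
  fixes V :: "nat \<Rightarrow> real^'n"
  assumes "nondeg_simplex V" "i \<le> CARD('n)"
  shows "w \<bullet> outer_normal V i = - (w \<bullet> G V i) / norm (G V i)"
  using outer_normal_eq[OF assms] by simp

lemma dot_n_zero:
  fixes V :: "nat \<Rightarrow> real^'n"
  assumes "nondeg_simplex V" "i \<le> CARD('n)"
  shows "w \<bullet> outer_normal V i = 0 \<longleftrightarrow> w \<bullet> G V i = 0"
  using dot_n[OF assms] grad_nonzero[OF assms] by simp

lemma perp_self:
  fixes V :: "nat \<Rightarrow> real^'n"
  assumes "nondeg_simplex V" "i \<le> CARD('n)"
  shows "G V i - (G V i \<bullet> outer_normal V i) *\<^sub>R outer_normal V i = 0"
proof -
  have nz: "norm (G V i) \<noteq> 0" using grad_nonzero[OF assms] by simp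
  have "G V i \<bullet> G V i = norm (G V i) * norm (G V i)" by (simp add: dot_square_norm power2_eq_square)
  then show ?thesis using nz unfolding outer_normal_eq[OF assms] by simp
qed

lemma n_edge:
  fixes V :: "nat \<Rightarrow> real^'n"
  assumes "nondeg_simplex V" "i \<le> CARD('n)" "x \<le> CARD('n)" "y \<le> CARD('n)" "x \<noteq> i" "y \<noteq> i"
  shows "outer_normal V i \<bullet> (V x - V y) = 0" "tangent V x y \<bullet> outer_normal V i = 0"
proof -
  show e: "outer_normal V i \<bullet> (V x - V y) = 0"
    using grad_diff[OF assms(1,2,3,4)] assms(5,6) dot_n[OF assms(1,2), of "V x - V y"] by (simp add: inner_commute)
  show "tangent V x y \<bullet> outer_normal V i = 0"
    using e unfolding tangent_def by (simp add: inner_commute)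
qed

lemma perp_nz:
  fixes V :: "nat \<Rightarrow> real^'n"
  assumes "nondeg_simplex V" "i \<le> CARD('n)" "a \<le> CARD('n)" "b \<le> CARD('n)" "a \<noteq> i" "b \<noteq> i" "b \<noteq> a"
  shows "G V a - (G V a \<bullet> outer_normal V i) *\<^sub>R outer_normal V i \<noteq> 0"
proof
  assume h: "G V a - (G V a \<bullet> outer_normal V i) *\<^sub>R outer_normal V i = 0"
  have "G V a \<bullet> (V a - V b) = 1" using grad_diff[OF assms(1,3,3,4)] assms by simp
  moreover have "outer_normal V i \<bullet> (V a - V b) = 0" by (rule n_edge[OF assms(1,2,3,4,5,6)])
  moreover have "G V a = (G V a \<bullet> outer_normal V i) *\<^sub>R outer_normal V i" using h by simp
  ultimately show False by (metis inner_scaleR_left mult_zero_right zero_neq_one)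
qed

lemma tan_G:
  fixes V :: "nat \<Rightarrow> real^'n"
  assumes "nondeg_simplex V" "a \<le> CARD('n)" "x \<le> CARD('n)" "y \<le> CARD('n)"
  shows "tangent V x y \<bullet> G V a = ((if x = a then 1 else 0) - (if y = a then 1 else 0)) / norm (V x - V y)"
  using grad_diff[OF assms] unfolding tangent_def by (simp add: inner_commute)

lemma tan_G_nz:
  fixes V :: "nat \<Rightarrow> real^'n"
  assumes "nondeg_simplex V" "a \<le> CARD('n)" "x \<le> CARD('n)" "y \<le> CARD('n)" "x \<noteq> y" "x = a \<or> y = a"
  shows "tangent V x y \<bullet> G V a \<noteq> 0"
proof -
  have "V x \<noteq> V y" using assms(1,3,4,5) unfolding nondeg_simplex_def by (auto dest: inj_onD)
  then show ?thesis using tan_G[OF assms(1-4)] assms(5,6) by auto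
qed

lemma tmv_zero: "nt_comp M n = 0 \<Longrightarrow> t \<bullet> n = 0 \<Longrightarrow> t \<bullet> (M *v n) = 0"
  unfolding nt_comp_def by (metis eq_iff_diff_eq_0 inner_scaleR_right mult_zero_right)

lemma nt_S:
  fixes V :: "nat \<Rightarrow> real^'n"
  assumes "nondeg_simplex V" "j \<le> CARD('n)"
  shows "nt_comp (dev (outer_prod a w)) (outer_normal V j) = (w \<bullet> outer_normal V j) *\<^sub>R (a - (a \<bullet> outer_normal V j) *\<^sub>R outer_normal V j)"
  by (rule nt_dev_outer[OF nrm_n[OF assms]])

lemma tan_S:
  fixes V :: "nat \<Rightarrow> real^'n"
  assumes "nondeg_simplex V" "i \<le> CARD('n)" "x \<le> CARD('n)" "y \<le> CARD('n)" "x \<noteq> i" "y \<noteq> i"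
  shows "tangent V x y \<bullet> (dev (outer_prod a w) *v outer_normal V i) = (w \<bullet> outer_normal V i) * (tangent V x y \<bullet> a)"
  using tang_dev_outer[of "tangent V x y" a w "outer_normal V i"] n_edge(2)[OF assms] by simp



lemma curl_self: "curl2 g \<bullet> g = 0"
  unfolding curl2_def inner_vec_def by (simp add: sum_2 vector_2)

lemma curl_zero: "curl2 g = 0 \<Longrightarrow> g = 0"
  unfolding curl2_def by (simp add: vec_eq_iff forall_2 vector_2)

lemma curl_nz2:
  fixes V :: "nat \<Rightarrow> real^2"
  assumes nd: "nondeg_simplex V" and le: "i \<le> 2" "a \<le> 2" "b \<le> 2" and d: "i \<noteq> a" "i \<noteq> b" "a \<noteq> b"
  shows "curl2 (G V b) \<bullet> G V i \<noteq> 0"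
proof
  assume h: "curl2 (G V b) \<bullet> G V i = 0"
  let ?w = "curl2 (G V b)"
  have U: "{..2::nat} = {i, a, b}" using le d by auto
  have "(\<Sum>k\<le>2. G V k) = 0" using grad_sum[OF nd] by simp
  then have "G V i + G V a + G V b = 0" using d unfolding U by (simp add: add.assoc)
  then have "?w \<bullet> (G V i + G V a + G V b) = 0" by simp
  then have ha: "?w \<bullet> G V a = 0" using h curl_self[of "G V b"] by (simp add: inner_add_right inner_commute)
  have "?w = 0"
  proof (rule grad_orth_zero[OF nd])
    fix k assume "k \<le> CARD(2)"
    then have "k \<in> {i, a, b}" using U by auto
    then show "?w \<bullet> G V k = 0" using h ha curl_self[of "G V b"] by auto
  qed
  then have "G V b = 0" by (rule curl_zero)
  then show False using grad_nonzero[OF nd, of b] le by simp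
qed

lemma S2_gen:
  fixes V :: "nat \<Rightarrow> real^2"
  assumes nd: "nondeg_simplex V" and le: "i \<le> 2" "a \<le> 2" "b \<le> 2" and d: "i \<noteq> a" "i \<noteq> b" "a \<noteq> b"
  shows "nt_comp (dev (outer_prod (G V a) (curl2 (G V b)))) (outer_normal V a) = 0"
    "nt_comp (dev (outer_prod (G V a) (curl2 (G V b)))) (outer_normal V b) = 0"
    "nt_comp (dev (outer_prod (G V a) (curl2 (G V b)))) (outer_normal V i) \<noteq> 0"
proof -
  have c: "CARD(2) = 2" by simp
  show "nt_comp (dev (outer_prod (G V a) (curl2 (G V b)))) (outer_normal V a) = 0"
    using nt_S[OF nd, of a] perp_self[OF nd, of a] le by simp
  show "nt_comp (dev (outer_prod (G V a) (curl2 (G V b)))) (outer_normal V b) = 0"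
    using nt_S[OF nd, of b] dot_n_zero[OF nd, of b] curl_self[of "G V b"] le by simp
  have "curl2 (G V b) \<bullet> outer_normal V i \<noteq> 0"
    using dot_n_zero[OF nd, of i] curl_nz2[OF nd le d] le by simp
  moreover have "G V a - (G V a \<bullet> outer_normal V i) *\<^sub>R outer_normal V i \<noteq> 0"
    using perp_nz[OF nd, of i a b] le d by simp
  ultimately show "nt_comp (dev (outer_prod (G V a) (curl2 (G V b)))) (outer_normal V i) \<noteq> 0"
    using nt_S[OF nd, of i] le by simp
qed

lemma S2_props:
  fixes V :: "nat \<Rightarrow> real^2"
  assumes nd: "nondeg_simplex V"
  shows "\<forall>i\<in>{0..2}. \<forall>j\<in>{0..2}. i \<noteq> j \<longrightarrow> nt_comp (S2 V i) (outer_normal V j) = 0"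
    "\<forall>i\<in>{0..2}. nt_comp (S2 V i) (outer_normal V i) \<noteq> 0"
proof -
  have A: "nt_comp (S2 V i) (outer_normal V ((i+1) mod 3)) = 0 \<and>
        nt_comp (S2 V i) (outer_normal V ((i+2) mod 3)) = 0 \<and>
        nt_comp (S2 V i) (outer_normal V i) \<noteq> 0" if "i \<le> 2" for i
  proof -
    have i3: "i = 0 \<or> i = 1 \<or> i = 2" using that by auto
    then have "i \<noteq> (i+1) mod 3" "i \<noteq> (i+2) mod 3" "(i+1) mod 3 \<noteq> (i+2) mod 3" by auto
    then show ?thesis using S2_gen[OF nd that, of "(i+1) mod 3" "(i+2) mod 3"] unfolding S2_def by simp
  qed
  show "\<forall>i\<in>{0..2}. \<forall>j\<in>{0..2}. i \<noteq> j \<longrightarrow> nt_comp (S2 V i) (outer_normal V j) = 0"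
  proof (intro ballI impI)
    fix i j :: nat assume "i \<in> {0..2}" "j \<in> {0..2}" "i \<noteq> j"
    then have i3: "i = 0 \<or> i = 1 \<or> i = 2" "j = 0 \<or> j = 1 \<or> j = 2" "i \<noteq> j" by auto
    then have "j = (i+1) mod 3 \<or> j = (i+2) mod 3" "i \<le> 2" by auto
    then show "nt_comp (S2 V i) (outer_normal V j) = 0" using A by blast
  qed
  show "\<forall>i\<in>{0..2}. nt_comp (S2 V i) (outer_normal V i) \<noteq> 0" using A by auto
qed

lemma part2:
  fixes V :: "nat \<Rightarrow> real^2"
  assumes nd: "nondeg_simplex V"
  shows "(inj_on (S2 V) {0..2} \<and> independent (S2 V ` {0..2}) \<and> span (S2 V ` {0..2}) = tracefree) \<and>
      (\<forall>i\<in>{0..2}. \<forall>j\<in>{0..2}. i \<noteq> j \<longrightarrow> nt_comp (S2 V i) (outer_normal V j) = 0) \<and>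
      (\<forall>i\<in>{0..2}. nt_comp (S2 V i) (outer_normal V i) \<noteq> 0)"
proof -
  note P = S2_props[OF nd]
  have D: "inj_on (S2 V) {0..2}" "independent (S2 V ` {0..2})"
    using indep_diag[of "{0..2::nat}" "\<lambda>k M. nt_comp M (outer_normal V k)" "S2 V"] P linear_nt by auto
  have "card (S2 V ` {0..2}) = 3" using card_image[OF D(1)] by simp
  moreover have "S2 V ` {0..2} \<subseteq> tracefree" by (auto simp: S2_def tracefree_def trace_dev)
  ultimately have "span (S2 V ` {0..2}) = tracefree" using span_tracefree[OF D(2)] by simp
  then show ?thesis using D P by auto
qed



lemma binet: "cross3 a b \<bullet> cross3 c d = (a \<bullet> c) * (b \<bullet> d) - (a \<bullet> d) * (b \<bullet> c)"
  unfolding cross3_def inner_vec_def by (simp add: sum_3 vector_3 algebra_simps)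

lemma cross_self1: "cross3 x y \<bullet> x = 0" and cross_self2: "cross3 x y \<bullet> y = 0"
  unfolding cross3_def inner_vec_def by (simp_all add: sum_3 vector_3 algebra_simps)

lemma cross_nz3:
  fixes V :: "nat \<Rightarrow> real^3"
  assumes nd: "nondeg_simplex V" and le: "p \<le> 3" "q \<le> 3" "r \<le> 3" "s \<le> 3"
    and d: "p \<noteq> q" "p \<noteq> r" "p \<noteq> s" "q \<noteq> r" "q \<noteq> s" "r \<noteq> s"
  shows "cross3 (G V q) (G V r) \<bullet> G V s \<noteq> 0"
proof
  assume h: "cross3 (G V q) (G V r) \<bullet> G V s = 0"
  let ?u = "cross3 (G V q) (G V r)"
  have c: "CARD(3) = 3" by simp
  have "?u \<bullet> cross3 (V q - V p) (V r - V p) = 1"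
    unfolding binet using grad_diff[OF nd, of q q p] grad_diff[OF nd, of r r p] grad_diff[OF nd, of q r p] grad_diff[OF nd, of r q p] le d
    by simp
  then have nz: "?u \<noteq> 0" by auto
  have U: "{..3::nat} = {p, q, r, s}"
  proof (rule sym, rule card_subset_eq)
    show "{p, q, r, s} \<subseteq> {..3}" using le by auto
    show "card {p, q, r, s} = card {..3::nat}" using d by simp
  qed simp
  have "(\<Sum>k\<le>3. G V k) = 0" using grad_sum[OF nd] by simp
  then have "G V p + G V q + G V r + G V s = 0" using d unfolding U by (simp add: add.assoc)
  then have "?u \<bullet> (G V p + G V q + G V r + G V s) = 0" by simp
  then have hp: "?u \<bullet> G V p = 0" using h cross_self1[of "G V q" "G V r"] cross_self2[of "G V q" "G V r"]
    by (simp add: inner_add_right)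
  have "?u = 0"
  proof (rule grad_orth_zero[OF nd])
    fix k assume "k \<le> CARD(3)"
    then have "k \<in> {p, q, r, s}" using U by auto
    then show "?u \<bullet> G V k = 0" using h hp cross_self1[of "G V q" "G V r"] cross_self2[of "G V q" "G V r"] by auto
  qed
  then show False using nz by simp
qed

lemma S3_gen:
  fixes V :: "nat \<Rightarrow> real^3"
  assumes nd: "nondeg_simplex V" and le: "p \<le> 3" "x \<le> 3" "y \<le> 3" "z \<le> 3"
    and d: "p \<noteq> x" "p \<noteq> y" "p \<noteq> z" "x \<noteq> y" "x \<noteq> z" "y \<noteq> z"
    and M: "M = dev (outer_prod (G V x) (cross3 (G V y) (G V z)))"
  shows "nt_comp M (outer_normal V x) = 0" "nt_comp M (outer_normal V y) = 0"
    "nt_comp M (outer_normal V z) = 0" "nt_comp M (outer_normal V p) \<noteq> 0"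
    "tangent V y z \<bullet> (M *v outer_normal V p) = 0"
    "tangent V x y \<bullet> (M *v outer_normal V p) \<noteq> 0"
    "tangent V z x \<bullet> (M *v outer_normal V p) \<noteq> 0"
proof -
  have c: "CARD(3) = 3" by simp
  show "nt_comp M (outer_normal V x) = 0"
    unfolding M using nt_S[OF nd, of x] perp_self[OF nd, of x] le by simp
  show "nt_comp M (outer_normal V y) = 0"
    unfolding M using nt_S[OF nd, of y] dot_n_zero[OF nd, of y] cross_self1[of "G V y" "G V z"] le by simp
  show "nt_comp M (outer_normal V z) = 0"
    unfolding M using nt_S[OF nd, of z] dot_n_zero[OF nd, of z] cross_self2[of "G V y" "G V z"] le by simp
  have w: "cross3 (G V y) (G V z) \<bullet> outer_normal V p \<noteq> 0"
    using dot_n_zero[OF nd, of p] cross_nz3[OF nd, of x y z p] le d by simp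
  moreover have "G V x - (G V x \<bullet> outer_normal V p) *\<^sub>R outer_normal V p \<noteq> 0"
    using perp_nz[OF nd, of p x y] le d by simp
  ultimately show "nt_comp M (outer_normal V p) \<noteq> 0"
    unfolding M using nt_S[OF nd, of p] le by simp
  show "tangent V y z \<bullet> (M *v outer_normal V p) = 0"
    unfolding M using tan_S[OF nd, of p y z] tan_G[OF nd, of x y z] le d by simp
  show "tangent V x y \<bullet> (M *v outer_normal V p) \<noteq> 0"
    unfolding M using tan_S[OF nd, of p x y] tan_G_nz[OF nd, of x x y] w le d by simp
  show "tangent V z x \<bullet> (M *v outer_normal V p) \<noteq> 0"
    unfolding M using tan_S[OF nd, of p z x] tan_G_nz[OF nd, of x z x] w le d by simp
qed



lemma S3_props:
  fixes V :: "nat \<Rightarrow> real^3"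
  assumes nd: "nondeg_simplex V" and i: "i \<le> 3"
  shows "\<And>j q. j \<le> 3 \<Longrightarrow> j \<noteq> i \<Longrightarrow> q \<le> 1 \<Longrightarrow> nt_comp (S3 V i q) (outer_normal V j) = 0"
    "\<And>q. q \<le> 1 \<Longrightarrow> nt_comp (S3 V i q) (outer_normal V i) \<noteq> 0"
    "tangent V ((i+2) mod 4) ((i+3) mod 4) \<bullet> (S3 V i 0 *v outer_normal V i) = 0 \<and>
          tangent V ((i+1) mod 4) ((i+2) mod 4) \<bullet> (S3 V i 0 *v outer_normal V i) \<noteq> 0 \<and>
          tangent V ((i+3) mod 4) ((i+1) mod 4) \<bullet> (S3 V i 0 *v outer_normal V i) \<noteq> 0 \<and>
          tangent V ((i+2) mod 4) ((i+3) mod 4) \<bullet> (S3 V i 1 *v outer_normal V i) \<noteq> 0 \<and>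
          tangent V ((i+1) mod 4) ((i+2) mod 4) \<bullet> (S3 V i 1 *v outer_normal V i) \<noteq> 0 \<and>
          tangent V ((i+3) mod 4) ((i+1) mod 4) \<bullet> (S3 V i 1 *v outer_normal V i) = 0"
proof -
  define a where "a = (i+1) mod 4"
  define b where "b = (i+2) mod 4"
  define c where "c = (i+3) mod 4"
  have le: "a \<le> 3" "b \<le> 3" "c \<le> 3" unfolding a_def b_def c_def by auto
  have i4: "i = 0 \<or> i = 1 \<or> i = 2 \<or> i = 3" using i by auto
  have d: "i \<noteq> a" "i \<noteq> b" "i \<noteq> c" "a \<noteq> b" "a \<noteq> c" "b \<noteq> c"
    unfolding a_def b_def c_def using i4 by auto
  have oth: "j = a \<or> j = b \<or> j = c" if "j \<le> 3" "j \<noteq> i" for j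
  proof -
    have "j = 0 \<or> j = 1 \<or> j = 2 \<or> j = 3" using that by auto
    then show ?thesis using i4 that(2) unfolding a_def b_def c_def by auto
  qed
  have S0: "S3 V i 0 = dev (outer_prod (G V a) (cross3 (G V b) (G V c)))"
    unfolding S3_def a_def b_def c_def by simp
  have S1: "S3 V i 1 = dev (outer_prod (G V b) (cross3 (G V c) (G V a)))"
    unfolding S3_def a_def b_def c_def by simp
  note P0 = S3_gen[OF nd i le(1) le(2) le(3) d S0]
  note P1 = S3_gen[OF nd i le(2) le(3) le(1) d(2) d(3) d(1) d(6) d(4)[symmetric] d(5)[symmetric] S1]
  have q: "q = 0 \<or> q = 1" if "q \<le> (1::nat)" for q using that by auto
  show "\<And>j q. j \<le> 3 \<Longrightarrow> j \<noteq> i \<Longrightarrow> q \<le> 1 \<Longrightarrow> nt_comp (S3 V i q) (outer_normal V j) = 0"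
    using oth q P0 P1 by blast
  show "\<And>q. q \<le> 1 \<Longrightarrow> nt_comp (S3 V i q) (outer_normal V i) \<noteq> 0"
    using q P0 P1 by blast
  show "tangent V ((i+2) mod 4) ((i+3) mod 4) \<bullet> (S3 V i 0 *v outer_normal V i) = 0 \<and>
          tangent V ((i+1) mod 4) ((i+2) mod 4) \<bullet> (S3 V i 0 *v outer_normal V i) \<noteq> 0 \<and>
          tangent V ((i+3) mod 4) ((i+1) mod 4) \<bullet> (S3 V i 0 *v outer_normal V i) \<noteq> 0 \<and>
          tangent V ((i+2) mod 4) ((i+3) mod 4) \<bullet> (S3 V i 1 *v outer_normal V i) \<noteq> 0 \<and>
          tangent V ((i+1) mod 4) ((i+2) mod 4) \<bullet> (S3 V i 1 *v outer_normal V i) \<noteq> 0 \<and>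
          tangent V ((i+3) mod 4) ((i+1) mod 4) \<bullet> (S3 V i 1 *v outer_normal V i) = 0"
    using P0 P1 unfolding a_def[symmetric] b_def[symmetric] c_def[symmetric] by blast
qed



lemma part3:
  fixes V :: "nat \<Rightarrow> real^3"
  assumes nd: "nondeg_simplex V"
  shows "(inj_on (\<lambda>(i, q). S3 V i q) ({0..3} \<times> {0..1})
        \<and> independent ((\<lambda>(i, q). S3 V i q) ` ({0..3} \<times> {0..1}))
        \<and> span ((\<lambda>(i, q). S3 V i q) ` ({0..3} \<times> {0..1})) = tracefree) \<and>
      (\<forall>i\<in>{0..3}. \<forall>j\<in>{0..3}. \<forall>q\<in>{0..1}. i \<noteq> j \<longrightarrow>
          nt_comp (S3 V i q) (outer_normal V j) = 0) \<and>
      (\<forall>i\<in>{0..3}. \<forall>q\<in>{0..1}. nt_comp (S3 V i q) (outer_normal V i) \<noteq> 0) \<and>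
      (\<forall>i\<in>{0..3}.
          tangent V ((i+2) mod 4) ((i+3) mod 4) \<bullet> (S3 V i 0 *v outer_normal V i) = 0 \<and>
          tangent V ((i+1) mod 4) ((i+2) mod 4) \<bullet> (S3 V i 0 *v outer_normal V i) \<noteq> 0 \<and>
          tangent V ((i+3) mod 4) ((i+1) mod 4) \<bullet> (S3 V i 0 *v outer_normal V i) \<noteq> 0 \<and>
          tangent V ((i+2) mod 4) ((i+3) mod 4) \<bullet> (S3 V i 1 *v outer_normal V i) \<noteq> 0 \<and>
          tangent V ((i+1) mod 4) ((i+2) mod 4) \<bullet> (S3 V i 1 *v outer_normal V i) \<noteq> 0 \<and>
          tangent V ((i+3) mod 4) ((i+1) mod 4) \<bullet> (S3 V i 1 *v outer_normal V i) = 0)"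
proof -
  let ?K = "{0..3::nat} \<times> {0..1::nat}"
  let ?f = "\<lambda>(i, q). S3 V i q"
  define tA where "tA = (\<lambda>k::nat\<times>nat. if snd k = 0 then (fst k + 3) mod 4 else (fst k + 2) mod 4)"
  define tB where "tB = (\<lambda>k::nat\<times>nat. if snd k = 0 then (fst k + 1) mod 4 else (fst k + 3) mod 4)"
  define L where "L = (\<lambda>k (M::real^3^3). tangent V (tA k) (tB k) \<bullet> (M *v outer_normal V (fst k)))"
  note Z = S3_props(1)[OF nd] and NZ = S3_props(2)[OF nd] and T = S3_props(3)[OF nd]
  have lin: "\<And>k. k \<in> ?K \<Longrightarrow> linear (L k)" unfolding L_def by (rule linear_tmv)
  have nz: "L k (?f k) \<noteq> 0" if "k \<in> ?K" for k
  proof -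
    obtain j q where k0: "k = (j, q)" by (cases k)
    then have k: "k = (j, q)" "j \<le> 3" "q = 0 \<or> q = 1" using that by auto
    show ?thesis using T[OF k(2)] k unfolding L_def tA_def tB_def by auto
  qed
  have z: "L k (?f k') = 0" if "k \<in> ?K" "k' \<in> ?K" "k' \<noteq> k" for k k'
  proof -
    obtain j q where k0: "k = (j, q)" by (cases k)
    then have k: "k = (j, q)" "j \<le> 3" "q = 0 \<or> q = 1" using that by auto
    obtain j' q' where k0': "k' = (j', q')" by (cases k')
    then have k': "k' = (j', q')" "j' \<le> 3" "q' = 0 \<or> q' = 1" using that by auto
    show ?thesis
    proof (cases "j' = j")
      case True
      then have "q' \<noteq> q" using that k k' by auto
      then show ?thesis using T[OF k(2)] k k' True unfolding L_def tA_def tB_def by auto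
    next
      case False
      have nt0: "nt_comp (S3 V j' q') (outer_normal V j) = 0"
        using Z[OF k'(2) k(2)] False k'(3) by auto
      have tA: "tA k \<le> 3" "tA k \<noteq> j" "tB k \<le> 3" "tB k \<noteq> j"
      proof -
        have "j = 0 \<or> j = 1 \<or> j = 2 \<or> j = 3" using k(2) by auto
        then show "tA k \<le> 3" "tA k \<noteq> j" "tB k \<le> 3" "tB k \<noteq> j"
          unfolding tA_def tB_def k(1) using k(3) by auto
      qed
      have "tangent V (tA k) (tB k) \<bullet> outer_normal V j = 0"
        using n_edge(2)[OF nd, of j "tA k" "tB k"] tA k(2) by simp
      then show ?thesis unfolding L_def using tmv_zero[OF nt0] k k' by simp
    qed
  qed
  have D: "inj_on ?f ?K" "independent (?f ` ?K)"
    using indep_diag[of ?K L ?f] lin nz z by auto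
  have "card (?f ` ?K) = 8" using card_image[OF D(1)] by simp
  moreover have "?f ` ?K \<subseteq> tracefree" by (auto simp: S3_def tracefree_def trace_dev)
  ultimately have sp: "span (?f ` ?K) = tracefree" using span_tracefree[OF D(2)] by simp
  show ?thesis
  proof (intro conjI ballI impI)
    show "inj_on ?f ?K" "independent (?f ` ?K)" "span (?f ` ?K) = tracefree" using D sp by auto
  next
    fix i j q :: nat assume "i \<in> {0..3}" "j \<in> {0..3}" "q \<in> {0..1}" "i \<noteq> j"
    then show "nt_comp (S3 V i q) (outer_normal V j) = 0" using Z by auto
  next
    fix i q :: nat assume "i \<in> {0..3}" "q \<in> {0..1}"
    then show "nt_comp (S3 V i q) (outer_normal V i) \<noteq> 0" using NZ by auto
  qed (use T in auto)
qed


theorem lemma5p1: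
  shows
  "(\<forall>V :: nat \<Rightarrow> real^2. nondeg_simplex V \<longrightarrow>
      (inj_on (S2 V) {0..2} \<and> independent (S2 V ` {0..2}) \<and> span (S2 V ` {0..2}) = tracefree) \<and>
      (\<forall>i\<in>{0..2}. \<forall>j\<in>{0..2}. i \<noteq> j \<longrightarrow> nt_comp (S2 V i) (outer_normal V j) = 0) \<and>
      (\<forall>i\<in>{0..2}. nt_comp (S2 V i) (outer_normal V i) \<noteq> 0))
   \<and>
   (\<forall>V :: nat \<Rightarrow> real^3. nondeg_simplex V \<longrightarrow>
      (inj_on (\<lambda>(i, q). S3 V i q) ({0..3} \<times> {0..1})
        \<and> independent ((\<lambda>(i, q). S3 V i q) ` ({0..3} \<times> {0..1}))
        \<and> span ((\<lambda>(i, q). S3 V i q) ` ({0..3} \<times> {0..1})) = tracefree) \<and>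
      (\<forall>i\<in>{0..3}. \<forall>j\<in>{0..3}. \<forall>q\<in>{0..1}. i \<noteq> j \<longrightarrow>
          nt_comp (S3 V i q) (outer_normal V j) = 0) \<and>
      (\<forall>i\<in>{0..3}. \<forall>q\<in>{0..1}. nt_comp (S3 V i q) (outer_normal V i) \<noteq> 0) \<and>
      (\<forall>i\<in>{0..3}.
          tangent V ((i+2) mod 4) ((i+3) mod 4) \<bullet> (S3 V i 0 *v outer_normal V i) = 0 \<and>
          tangent V ((i+1) mod 4) ((i+2) mod 4) \<bullet> (S3 V i 0 *v outer_normal V i) \<noteq> 0 \<and>
          tangent V ((i+3) mod 4) ((i+1) mod 4) \<bullet> (S3 V i 0 *v outer_normal V i) \<noteq> 0 \<and>
          tangent V ((i+2) mod 4) ((i+3) mod 4) \<bullet> (S3 V i 1 *v outer_normal V i) \<noteq> 0 \<and>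
          tangent V ((i+1) mod 4) ((i+2) mod 4) \<bullet> (S3 V i 1 *v outer_normal V i) \<noteq> 0 \<and>
          tangent V ((i+3) mod 4) ((i+1) mod 4) \<bullet> (S3 V i 1 *v outer_normal V i) = 0))"
  using part2 part3 by blast

end
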